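(* Let $A,B\in\mathbb{C}^{m\times n}$ and let $Q_A=A^\dagger A$. The following are equivalent: (a) $A\le^{\diamond}B$; (b) $\operatorname{rk}(B^\dagger-A^\dagger)=\operatorname{rk}((I_n-Q_A)B^\dagger)$ and $\mathcal{R}(A^* )\subseteq\mathcal{R}(B^* )$; (c) there exists an idempotent matrix $Q\in\mathbb{C}^{n\times n}$ with $A^\dagger=QB^\dagger$, and $\mathcal{R}(A^* )\subseteq\mathcal{R}(B^* )$.
   Context: For a matrix $M$, $M^*$ is its conjugate transpose, $M^\dagger$ its Moore–Penrose inverse, $\mathcal{R}(M)$ its column space, $\operatorname{rk}(M)$ its rank. Diamond partial order: for $A,B\in\mathbb{C}^{m\times n}$, $A\le^{\diamond}B$ means $\mathcal{R}(A)\subseteq\mathcal{R}(B)$, $\mathcal{R}(A^* )\subseteq\mathcal{R}(B^* )$, and $AB^*A=AA^*A$. *)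

theory Defs
  imports "HOL-Analysis.Analysis"
begin

text \<open>Complex m x n matrices are rendered as complex^'n^'m (dimensions are type parameters).\<close>

definition cadj :: "complex^'n^'m \<Rightarrow> complex^'m^'n" where
  "cadj A = (\<chi> i j. cnj (A $ j $ i))"

definition colspace :: "complex^'n^'m \<Rightarrow> (complex^'m) set" where
  "colspace M = range (\<lambda>x. M *v x)"

definition mp_inv :: "complex^'n^'m \<Rightarrow> complex^'m^'n" where
  "mp_inv A = (THE X. A ** X ** A = A \<and> X ** A ** X = X \<and>
                      cadj (A ** X) = A ** X \<and> cadj (X ** A) = X ** A)"

definition diamond_le :: "complex^'n^'m \<Rightarrow> complex^'n^'m \<Rightarrow> bool" where
  "diamond_le A B \<longleftrightarrow> colspace A \<subseteq> colspace B \<and> colspace (cadj A) \<subseteq> colspace (cadj B)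
     \<and> A ** cadj B ** A = A ** cadj A ** A"

end

theory Submission imports Defs begin


definition cdim :: "'a::field^'n^'m \<Rightarrow> nat" where
  "cdim M = vec.dim (range ((*v) M))"

lemma span_columns_range: "vec.span (columns (M::'a::field^'n^'m)) = range ((*v) M)"
proof
  show "vec.span (columns M) \<subseteq> range ((*v) M)"
  proof (rule vec.span_minimal)
    show "vec.subspace (range ((*v) M))" by (simp add: vec.subspace_image)
    show "columns M \<subseteq> range ((*v) M)"
      by (auto simp: columns_def column_def
        intro!: image_eqI[where x="axis _ 1"] simp: matrix_vector_mult_def vec_eq_iff axis_def if_distrib if_distribR cong: if_cong)
  qed
  show "range ((*v) M) \<subseteq> vec.span (columns M)"
    using matrix_vector_mult_in_columnspace_gen by blast
qed

lemma rank_cdim: "rank (M::'a::field^'n^'m) = cdim (transpose M)"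
  unfolding row_rank_def_gen cdim_def
  by (metis columns_transpose span_columns_range vec.dim_span)

lemma range_mult_sub: "range ((*v) (P ** Q)) \<subseteq> range ((*v) P)"
  by (auto simp: matrix_vector_mul_assoc[symmetric])

lemma cdim_mult_le: "cdim (P ** Q) \<le> cdim P"
  unfolding cdim_def by (rule vec.dim_subset[OF range_mult_sub])

lemma colsub:
  fixes P :: "'a::field^'n^'m" and R :: "'a^'k^'m"
  assumes "range ((*v) P) \<subseteq> range ((*v) R)"
  shows "\<exists>Z. P = R ** Z"
proof -
  have "\<forall>j. \<exists>z. P *v axis j 1 = R *v z" using assms by blast
  then obtain z where z: "\<And>j. P *v axis j 1 = R *v z j" by metis
  define Z where "Z = (\<chi> i j. z j $ i)"
  have "P = R ** Z"
  proof -
    { fix i j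
      have "P $ i $ j = (P *v axis j 1) $ i"
        by (simp add: matrix_vector_mult_def axis_def if_distrib if_distribR cong: if_cong)
      also have "\<dots> = (R ** Z) $ i $ j"
        unfolding z by (simp add: matrix_vector_mult_def matrix_matrix_mult_def Z_def)
      finally have "P $ i $ j = (R ** Z) $ i $ j" . }
    then show ?thesis by (simp add: vec_eq_iff)
  qed
  then show ?thesis ..
qed

lemma cdim_eq_range:
  fixes P :: "'a::field^'n^'m" and Q :: "'a^'k^'n"
  assumes "cdim (P ** Q) = cdim P"
  shows "range ((*v) (P ** Q)) = range ((*v) P)"
  using assms unfolding cdim_def
  by (intro vec.subspace_dim_equal range_mult_sub) (auto simp: vec.subspace_image)

lemma cdim_inj:
  fixes P :: "'a::field^'n^'m" and Q :: "'a^'k^'n"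
  assumes "\<And>x. P *v (Q *v x) = 0 \<Longrightarrow> Q *v x = 0"
  shows "cdim (P ** Q) = cdim Q"
proof -
  have "range ((*v) (P ** Q)) = (*v) P ` range ((*v) Q)"
    by (auto simp: matrix_vector_mul_assoc[symmetric] image_iff)
  moreover have "inj_on ((*v) P) (vec.span (range ((*v) Q)))"
  proof -
    have sp: "vec.span (range ((*v) Q)) = range ((*v) Q)"
      by (simp add: vec.span_eq_iff vec.subspace_image)
    show ?thesis unfolding sp inj_on_def
    proof clarify
      fix x y assume "P *v (Q *v x) = P *v (Q *v y)"
      then have "P *v (Q *v (x - y)) = 0" by (simp add: matrix_vector_mult_diff_distrib)
      then have "Q *v (x - y) = 0" by (rule assms)
      then show "Q *v x = Q *v y" by (simp add: matrix_vector_mult_diff_distrib)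
    qed
  qed
  ultimately show ?thesis unfolding cdim_def
    by (simp add: vec.dim_image_eq)
qed

lemma cadj_mult: "cadj (X ** Y) = cadj Y ** cadj X"
  by (simp add: cadj_def matrix_matrix_mult_def vec_eq_iff mult.commute)

lemma cadj_cadj[simp]: "cadj (cadj X) = X"
  by (simp add: cadj_def vec_eq_iff)

lemma cadj_diff: "cadj (X - Y) = cadj X - cadj Y"
  by (simp add: cadj_def vec_eq_iff)

lemma cadj_mat1[simp]: "cadj (mat 1) = mat 1"
  by (simp add: cadj_def vec_eq_iff mat_def)

lemma cadj_eq_iff: "cadj X = cadj Y \<longleftrightarrow> X = Y"
  by (metis cadj_cadj)

definition hdot :: "complex^'n \<Rightarrow> complex^'n \<Rightarrow> complex" where
  "hdot u w = (\<Sum>i\<in>UNIV. cnj (u $ i) * w $ i)"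

lemma hd_cadj: "hdot v (cadj X *v u) = hdot (X *v v) u"
proof -
  have "hdot v (cadj X *v u) = (\<Sum>i\<in>UNIV. \<Sum>j\<in>UNIV. cnj (v $ i) * cnj (X $ j $ i) * u $ j)"
    unfolding hdot_def cadj_def matrix_vector_mult_def by (simp add: sum_distrib_left mult.assoc)
  also have "\<dots> = (\<Sum>j\<in>UNIV. \<Sum>i\<in>UNIV. cnj (v $ i) * cnj (X $ j $ i) * u $ j)"
    by (rule sum.swap)
  also have "\<dots> = hdot (X *v v) u"
    unfolding hdot_def matrix_vector_mult_def by (simp add: sum_distrib_left mult_ac)
  finally show ?thesis .
qed

lemma hd_self: assumes "hdot u u = 0" shows "u = 0"
proof -
  have "hdot u u = complex_of_real (\<Sum>i\<in>UNIV. (cmod (u $ i))^2)"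
  proof -
    have "\<And>z. cnj z * z = (complex_of_real (cmod z))^2" by (metis complex_norm_square of_real_power mult.commute)
    then show ?thesis unfolding hdot_def of_real_sum of_real_power by simp
  qed
  with assms have "complex_of_real (\<Sum>i\<in>UNIV. (cmod (u $ i))^2) = 0" by simp
  then have "(\<Sum>i\<in>UNIV. (cmod (u $ i))^2) = 0" by (simp only: of_real_eq_0_iff)
  then have "\<forall>i\<in>UNIV. (cmod (u $ i))^2 = 0"
    by (subst sum_nonneg_eq_0_iff[symmetric]) auto
  then show ?thesis by (simp add: vec_eq_iff)
qed

lemma cancel_vec: assumes "cadj X *v (X *v v) = 0" shows "X *v v = 0"
  using hd_self[of "X *v v"] hd_cadj[of v X "X *v v"] assms by (simp add: hdot_def)

lemma exists_W: "\<exists>W. cadj A ** A ** W = cadj (A::complex^'n^'m)"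
proof -
  have e1: "cdim (cadj A ** A) = cdim A"
    by (rule cdim_inj) (rule cancel_vec)
  have e2: "cdim (A ** cadj A) = cdim (cadj A)"
    by (rule cdim_inj) (metis cadj_cadj cancel_vec)
  have "cdim (cadj A ** A) = cdim (cadj A)"
    using e1 e2 cdim_mult_le[of A "cadj A"] cdim_mult_le[of "cadj A" A] by linarith
  then have "range ((*v) (cadj A ** A)) = range ((*v) (cadj A))"
    by (rule cdim_eq_range)
  then obtain Z where "cadj A = cadj A ** A ** Z"
    using colsub[of "cadj A" "cadj A ** A"] by auto
  then show ?thesis by metis
qed

definition penrose :: "complex^'n^'m \<Rightarrow> complex^'m^'n \<Rightarrow> bool" where
  "penrose A X \<longleftrightarrow> A ** X ** A = A \<and> X ** A ** X = X \<and>
                      cadj (A ** X) = A ** X \<and> cadj (X ** A) = X ** A"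

lemma tl2: "P ** Q = R \<Longrightarrow> P ** (Q ** M) = R ** M"
  by (simp add: matrix_mul_assoc)
lemma tl3: "P ** Q ** S = R \<Longrightarrow> P ** (Q ** (S ** M)) = R ** M"
  by (simp add: matrix_mul_assoc)

lemmas ra = matrix_mul_assoc[symmetric]

lemma penrose_exists: "\<exists>X. penrose A X"
proof -
  obtain W where W: "cadj A ** A ** W = cadj A" using exists_W by blast
  obtain V where V0: "cadj (cadj A) ** cadj A ** V = cadj (cadj A)" using exists_W by blast
  have V: "A ** cadj A ** V = A" using V0 by simp
  have W': "cadj W ** cadj A ** A = A"
    using arg_cong[OF W, of cadj] by (simp add: cadj_mult matrix_mul_assoc)
  define G where "G = A ** W"
  have GG: "cadj G ** G = cadj G"
    unfolding G_def cadj_mult by (simp add: ra W[unfolded ra])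
  have Gh: "cadj G = G"
    by (metis GG cadj_cadj cadj_mult)
  have AWA: "A ** W ** A = A"
  proof -
    have "A ** W ** A = cadj G ** A" using Gh G_def by simp
    also have "\<dots> = A" unfolding G_def cadj_mult using W' by simp
    finally show ?thesis .
  qed
  define H where "H = cadj A ** V"
  have HH: "cadj H ** H = cadj H"
    unfolding H_def cadj_mult cadj_cadj by (simp add: ra V[unfolded ra])
  have Hh: "cadj H = H"
    by (metis HH cadj_cadj cadj_mult)
  have HH2: "H ** H = H" using HH Hh by simp
  have AH: "A ** H = A" unfolding H_def by (simp add: matrix_mul_assoc V)
  have H2: "H = cadj V ** A" using Hh unfolding H_def cadj_mult by simp
  have HWA: "H ** W ** A = H"
    unfolding H2 by (simp add: ra AWA[unfolded ra])
  define X where "X = H ** W"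
  have "penrose A X"
    unfolding penrose_def
  proof (intro conjI)
    show "A ** X ** A = A" unfolding X_def using AWA by (simp add: matrix_mul_assoc AH)
    show "X ** A ** X = X" unfolding X_def by (simp add: matrix_mul_assoc HWA HH2)
    show "cadj (A ** X) = A ** X" unfolding X_def by (simp add: matrix_mul_assoc AH Gh[unfolded G_def])
    show "cadj (X ** A) = X ** A" unfolding X_def by (simp add: HWA Hh)
  qed
  then show ?thesis ..
qed

lemma penrose_unique:
  assumes "penrose A X" "penrose A Z" shows "X = Z"
proof -
  have a1: "A ** X ** A = A" and a2: "X ** A ** X = X" and a3: "cadj (A ** X) = A ** X"
    and a4: "cadj (X ** A) = X ** A" using assms(1) unfolding penrose_def by auto
  have b1: "A ** Z ** A = A" and b2: "Z ** A ** Z = Z" and b3: "cadj (A ** Z) = A ** Z"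
    and b4: "cadj (Z ** A) = Z ** A" using assms(2) unfolding penrose_def by auto
  have "X = X ** cadj (A ** X)" using a2 a3 by (simp add: matrix_mul_assoc)
  also have "\<dots> = X ** cadj X ** cadj (A ** Z ** A)" by (simp add: b1 cadj_mult matrix_mul_assoc)
  also have "\<dots> = X ** cadj (A ** X) ** cadj (A ** Z)" by (simp add: cadj_mult matrix_mul_assoc)
  also have "\<dots> = X ** A ** X ** A ** Z" by (simp add: a3 b3 matrix_mul_assoc)
  also have "\<dots> = X ** A ** Z" using a2 by simp
  finally have x: "X = X ** A ** Z" .
  have "Z = cadj (Z ** A) ** Z" using b2 b4 by simp
  also have "\<dots> = cadj (A ** X ** A) ** cadj Z ** Z" by (simp add: a1 cadj_mult matrix_mul_assoc)
  also have "\<dots> = cadj (X ** A) ** cadj (Z ** A) ** Z" by (simp add: cadj_mult matrix_mul_assoc)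
  also have "\<dots> = X ** A ** (Z ** A ** Z)" by (simp add: a4 b4 matrix_mul_assoc)
  also have "\<dots> = X ** A ** Z" using b2 by simp
  finally show ?thesis using x by simp
qed

lemma mp_inv_penrose: "penrose A (mp_inv A)"
proof -
  have "\<exists>!X. penrose A X" using penrose_exists penrose_unique by blast
  then have "penrose A (THE X. penrose A X)" by (rule theI')
  then show ?thesis unfolding mp_inv_def penrose_def[abs_def] by simp
qed

lemma matrix_sub_ldistrib: "(M::'a::ring_1^'n^'m) ** (N - K) = M ** N - M ** K"
  by (simp add: matrix_matrix_mult_def vec_eq_iff sum_subtractf algebra_simps)
lemma matrix_sub_rdistrib: "((M::'a::ring_1^'n^'m) - N) ** K = M ** K - N ** K"
  by (simp add: matrix_matrix_mult_def vec_eq_iff sum_subtractf algebra_simps)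

lemma range_proj:
  fixes M :: "complex^'k^'m" and N :: "complex^'n^'m"
  assumes "P ** M = M" and "P = M ** K"
  shows "colspace N \<subseteq> colspace M \<longleftrightarrow> P ** N = N"
proof
  assume h: "colspace N \<subseteq> colspace M"
  show "P ** N = N"
  proof (subst matrix_eq, intro allI)
    fix v
    obtain w where "N *v v = M *v w" using h unfolding colspace_def by blast
    then have "(P ** N) *v v = (P ** M) *v w" by (simp add: matrix_vector_mul_assoc[symmetric])
    then show "(P ** N) *v v = N *v v" using \<open>N *v v = M *v w\<close> assms(1) by simp
  qed
next
  assume h: "P ** N = N"
  show "colspace N \<subseteq> colspace M"
    unfolding colspace_def
  proof clarify
    fix v
    have "N *v v = (P ** N) *v v" using h by simp
    also have "\<dots> = M *v (K *v (N *v v))" unfolding assms(2) by (simp add: matrix_vector_mul_assoc matrix_mul_assoc)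
    finally have "N *v v = M *v (K *v (N *v v))" .
    then show "N *v v \<in> range ((*v) M)" by blast
  qed
qed

lemma rank_cdim_mult: "rank ((M::'a::field^'n^'m) ** N) = cdim (transpose N ** transpose M)"
  by (simp only: rank_cdim matrix_transpose_mul)

lemma rank_mult_le: "rank ((M::'a::field^'n^'m) ** N) \<le> rank N"
  unfolding rank_cdim_mult by (simp add: rank_cdim cdim_mult_le)

lemma rank_eq_factor:
  fixes M :: "'a::field^'n^'n" and N :: "'a^'k^'n"
  assumes "rank (M ** N) = rank N"
  shows "\<exists>Z. N = Z ** (M ** N)"
proof -
  have "cdim (transpose N ** transpose M) = cdim (transpose N)"
    using assms rank_cdim_mult[of M N] rank_cdim[of N] by simp
  then have "range ((*v) (transpose N ** transpose M)) = range ((*v) (transpose N))"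
    by (rule cdim_eq_range)
  then obtain Z where "transpose N = transpose N ** transpose M ** Z"
    using colsub[of "transpose N" "transpose N ** transpose M"] by auto
  then have "transpose (transpose N) = transpose (transpose N ** transpose M ** Z)" by simp
  then have "N = transpose Z ** (M ** N)"
    by (simp only: transpose_transpose matrix_transpose_mul)
  then show ?thesis ..
qed

context
  fixes A B :: "complex^'n^'m" and X Y :: "complex^'m^'n"
  assumes pA: "penrose A X" and pB: "penrose B Y"
begin

lemma A1: "A ** X ** A = A" and A2: "X ** A ** X = X" and A3: "cadj (A ** X) = A ** X"
    and A4: "cadj (X ** A) = X ** A" using pA unfolding penrose_def by auto
lemma B1: "B ** Y ** B = B" and B2: "Y ** B ** Y = Y" and B3: "cadj (B ** Y) = B ** Y"
    and B4: "cadj (Y ** B) = Y ** B" using pB unfolding penrose_def by auto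

lemma rA_iff: "colspace A \<subseteq> colspace B \<longleftrightarrow> B ** Y ** A = A"
  by (rule range_proj) (use B1 in \<open>auto simp: matrix_mul_assoc\<close>)

lemma rS_iff: "colspace (cadj A) \<subseteq> colspace (cadj B) \<longleftrightarrow> Y ** B ** cadj A = cadj A"
proof (rule range_proj)
  have "Y ** B ** cadj B = cadj (B ** (Y ** B))" by (simp only: cadj_mult[of B "Y ** B"] B4)
  also have "\<dots> = cadj B" by (simp add: matrix_mul_assoc B1)
  finally show "Y ** B ** cadj B = cadj B" .
  show "Y ** B = cadj B ** cadj Y" using B4 cadj_mult[of Y B] by simp
qed

lemma X_eq1: "X = cadj A ** cadj X ** X"
proof -
  have "X = cadj (X ** A) ** X" using A2 A4 by simp
  also have "\<dots> = cadj A ** cadj X ** X" by (simp add: cadj_mult)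
  finally show ?thesis .
qed
lemma X_eq2: "X = X ** cadj X ** cadj A"
proof -
  have "X = X ** cadj (A ** X)" using A2 A3 by (simp add: matrix_mul_assoc)
  also have "\<dots> = X ** cadj X ** cadj A" by (simp add: cadj_mult matrix_mul_assoc)
  finally show ?thesis .
qed

lemma cadj5: "cadj (A ** X ** B ** X ** A) = X ** A ** cadj B ** A ** X"
proof -
  have "A ** X ** B ** X ** A = (A ** X) ** B ** (X ** A)" by (simp only: matrix_mul_assoc)
  then have "cadj (A ** X ** B ** X ** A) = cadj (X ** A) ** (cadj B ** cadj (A ** X))"
    by (simp only: cadj_mult[of "(A ** X) ** B" "X ** A"] cadj_mult[of "A ** X" B])
  also have "\<dots> = X ** A ** cadj B ** A ** X"
    by (simp only: A3 A4 matrix_mul_assoc)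
  finally show ?thesis .
qed

lemma eq_iff: "A ** cadj B ** A = A ** cadj A ** A \<longleftrightarrow> X ** B ** X = X"
proof
  assume h: "A ** cadj B ** A = A ** cadj A ** A"
  have "X ** A ** cadj A = cadj (A ** (X ** A))" by (simp only: cadj_mult[of A "X ** A"] A4)
  then have xa: "X ** A ** cadj A = cadj A" by (simp add: matrix_mul_assoc A1)
  have "cadj A ** A ** X = cadj (A ** X ** A)" by (simp only: cadj_mult[of "A ** X" A] A3 matrix_mul_assoc)
  then have ax: "cadj A ** A ** X = cadj A" by (simp add: A1)
  have "cadj (A ** X ** B ** X ** A) = X ** A ** cadj B ** A ** X" by (rule cadj5)
  also have "\<dots> = X ** (A ** cadj B ** A) ** X" by (simp add: matrix_mul_assoc)
  also have "\<dots> = X ** A ** cadj A ** (A ** X)" unfolding h by (simp add: matrix_mul_assoc)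
  also have "\<dots> = cadj A" unfolding xa by (simp add: matrix_mul_assoc ax)
  finally have r: "A ** X ** B ** X ** A = A" unfolding cadj_eq_iff .
  have "X ** B ** X = X ** (A ** X ** B ** X ** A) ** X"
    by (simp add: ra A2[unfolded ra] tl3[OF A2])
  also have "\<dots> = X" unfolding r by (rule A2)
  finally show "X ** B ** X = X" .
next
  assume h: "X ** B ** X = X"
  have r: "A ** X ** B ** X ** A = A"
    by (simp add: ra tl3[OF h] A1[unfolded ra])
  have c: "cadj A = X ** A ** cadj B ** A ** X"
    using cadj5 r by simp
  show "A ** cadj B ** A = A ** cadj A ** A"
    unfolding c by (simp add: ra tl3[OF A1] A1[unfolded ra])
qed

lemma rS_YBX: "Y ** B ** cadj A = cadj A \<Longrightarrow> Y ** B ** X = X"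
proof -
  assume h: "Y ** B ** cadj A = cadj A"
  have "Y ** B ** X = Y ** B ** (cadj A ** cadj X ** X)"
    using X_eq1 by (rule arg_cong[where f="\<lambda>Z. Y ** B ** Z"])
  also have "\<dots> = (Y ** B ** cadj A) ** cadj X ** X" by (simp only: matrix_mul_assoc)
  also have "\<dots> = X" unfolding h by (rule X_eq1[symmetric])
  finally show ?thesis .
qed

lemma rA_XBY: "B ** Y ** A = A \<Longrightarrow> X ** B ** Y = X"
proof -
  assume h: "B ** Y ** A = A"
  have "cadj A = cadj A ** B ** Y"
    using arg_cong[OF h, of cadj] by (simp only: cadj_mult[of "B ** Y" A] B3 matrix_mul_assoc)
  then have c: "cadj A ** B ** Y = cadj A" by simp
  have "X ** B ** Y = (X ** cadj X ** cadj A) ** B ** Y"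
    using X_eq2 by (rule arg_cong[where f="\<lambda>Z. Z ** B ** Y"])
  also have "\<dots> = X ** cadj X ** (cadj A ** B ** Y)" by (simp only: matrix_mul_assoc)
  also have "\<dots> = X" unfolding c by (rule X_eq2[symmetric])
  finally show ?thesis .
qed

lemma diamond_iff: "diamond_le A B \<longleftrightarrow>
   B ** Y ** A = A \<and> colspace (cadj A) \<subseteq> colspace (cadj B) \<and> X ** B ** X = X"
  unfolding diamond_le_def rA_iff eq_iff by auto

lemma a_to_b:
  assumes rA: "B ** Y ** A = A" and E: "X ** B ** X = X"
  shows "rank (Y - X) = rank ((mat 1 - X ** A) ** Y)"
proof -
  have xby: "X ** B ** Y = X" by (rule rA_XBY[OF rA])
  have e1: "(mat 1 - X ** A) ** Y = (mat 1 - X ** A) ** (Y - X)"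
    by (simp add: matrix_sub_ldistrib matrix_sub_rdistrib ra A2[unfolded ra])
  have e2: "Y - X = (mat 1 - X ** B) ** ((mat 1 - X ** A) ** Y)"
    by (simp add: matrix_sub_ldistrib matrix_sub_rdistrib ra tl3[OF E] xby[unfolded ra])
  show ?thesis
    using rank_mult_le[of "mat 1 - X ** A" "Y - X"] rank_mult_le[of "mat 1 - X ** B" "(mat 1 - X ** A) ** Y"]
    unfolding e1[symmetric] e2[symmetric] by linarith
qed

lemma b_to_c:
  assumes rk: "rank (Y - X) = rank ((mat 1 - X ** A) ** Y)" and rS: "Y ** B ** cadj A = cadj A"
  shows "X ** B ** X = X \<and> X ** B ** Y = X"
proof -
  have e1: "(mat 1 - X ** A) ** Y = (mat 1 - X ** A) ** (Y - X)"
    by (simp add: matrix_sub_ldistrib matrix_sub_rdistrib ra A2[unfolded ra])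
  obtain Z where Z: "Y - X = Z ** ((mat 1 - X ** A) ** (Y - X))"
    using rank_eq_factor[of "mat 1 - X ** A" "Y - X"] rk unfolding e1 by auto
  have px: "(mat 1 - X ** A) ** X = 0"
    by (simp add: matrix_sub_rdistrib ra A2[unfolded ra])
  have key: "X *v u = 0" if "X *v u = (Y - X) *v w" for u w
  proof -
    have "(Y - X) *v w = (Z ** ((mat 1 - X ** A) ** (Y - X))) *v w"
      using arg_cong[OF Z, of "\<lambda>M. M *v w"] by (simp only:)
    also have "\<dots> = (Z ** (mat 1 - X ** A)) *v ((Y - X) *v w)"
      by (simp only: matrix_vector_mul_assoc matrix_mul_assoc)
    also have "\<dots> = (Z ** (mat 1 - X ** A) ** X) *v u"
      by (simp add: that[symmetric] matrix_vector_mul_assoc)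
    also have "\<dots> = 0" by (simp add: ra px)
    finally show ?thesis using that by simp
  qed
  have ybx: "Y ** B ** X = X" by (rule rS_YBX[OF rS])
  have E: "X ** B ** X = X"
  proof (subst matrix_eq, intro allI)
    fix v
    have "X *v (v - B *v (X *v v)) = (Y - X) *v (B *v (X *v v))"
      by (simp add: matrix_vector_mult_diff_distrib matrix_vector_mult_diff_rdistrib
           matrix_vector_mul_assoc ybx matrix_sub_rdistrib ybx[unfolded ra])
    then have "X *v (v - B *v (X *v v)) = 0" by (rule key)
    then show "(X ** B ** X) *v v = X *v v"
      by (simp add: matrix_vector_mult_diff_distrib matrix_vector_mul_assoc ra)
  qed
  have F: "X ** B ** Y = X"
  proof (subst matrix_eq, intro allI)
    fix v
    have y0: "Y *v (v - B *v (Y *v v)) = 0"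
      by (simp add: matrix_vector_mult_diff_distrib matrix_vector_mul_assoc ra B2[unfolded ra])
    have "X *v (v - B *v (Y *v v)) = (Y - X) *v (- (v - B *v (Y *v v)))"
      using y0 by (simp add: matrix_vector_mult_diff_rdistrib matrix_vector_mult_diff_distrib algebra_simps)
    then have "X *v (v - B *v (Y *v v)) = 0" by (rule key)
    then show "(X ** B ** Y) *v v = X *v v"
      by (simp add: matrix_vector_mult_diff_distrib matrix_vector_mul_assoc ra)
  qed
  show ?thesis using E F by simp
qed

lemma c_to_a:
  assumes Q: "Q ** Q = Q" "X = Q ** Y" and rS: "Y ** B ** cadj A = cadj A"
  shows "B ** Y ** A = A \<and> X ** B ** X = X"
proof
  have ybx: "Y ** B ** X = X" by (rule rS_YBX[OF rS])
  have "X ** B ** X = Q ** (Y ** B ** X)" using Q(2) by (simp add: matrix_mul_assoc)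
  also have "\<dots> = Q ** X" by (simp add: ybx)
  also have "\<dots> = X" using Q by (simp add: matrix_mul_assoc)
  finally show "X ** B ** X = X" .
  have "B ** Y ** cadj Y = cadj (Y ** (B ** Y))" by (simp only: cadj_mult[of Y "B ** Y"] B3)
  then have byy: "B ** Y ** cadj Y = cadj Y" by (simp add: matrix_mul_assoc B2)
  have "A = cadj (A ** X) ** A" using A1 A3 by simp
  then have a: "A = cadj X ** cadj A ** A" by (simp add: cadj_mult)
  have cx: "cadj X = cadj Y ** cadj Q" using Q(2) by (simp add: cadj_mult)
  have a': "A = cadj Y ** cadj Q ** cadj A ** A" using a unfolding cx .
  have "B ** Y ** A = B ** Y ** (cadj Y ** cadj Q ** cadj A ** A)"
    using a' by (rule arg_cong[where f="\<lambda>Z. B ** Y ** Z"])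
  also have "\<dots> = cadj Y ** cadj Q ** cadj A ** A" by (simp add: matrix_mul_assoc byy)
  also have "\<dots> = A" by (rule a'[symmetric])
  finally show "B ** Y ** A = A" .
qed

end

theorem corollary3p3:
  fixes A B :: "complex^'n^'m"
  shows "(diamond_le A B
           \<longleftrightarrow> (rank (mp_inv B - mp_inv A) = rank ((mat 1 - mp_inv A ** A) ** mp_inv B)
                \<and> colspace (cadj A) \<subseteq> colspace (cadj B)))
       \<and> (diamond_le A B
           \<longleftrightarrow> ((\<exists>Q :: complex^'n^'n. Q ** Q = Q \<and> mp_inv A = Q ** mp_inv B)
                \<and> colspace (cadj A) \<subseteq> colspace (cadj B)))"
proof -
  let ?X = "mp_inv A" and ?Y = "mp_inv B"
  have pA: "penrose A ?X" and pB: "penrose B ?Y" by (rule mp_inv_penrose)+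
  note D = diamond_iff[OF pA pB]
  note rS = rS_iff[OF pA pB]
  show ?thesis
  proof (rule conjI; rule iffI)
    assume d: "diamond_le A B"
    then have rA: "B ** ?Y ** A = A" and cs: "colspace (cadj A) \<subseteq> colspace (cadj B)"
      and E: "?X ** B ** ?X = ?X" using D by auto
    show "rank (?Y - ?X) = rank ((mat 1 - ?X ** A) ** ?Y) \<and> colspace (cadj A) \<subseteq> colspace (cadj B)"
      using a_to_b[OF pA pB rA E] cs by (rule conjI)
  next
    assume h: "rank (?Y - ?X) = rank ((mat 1 - ?X ** A) ** ?Y) \<and> colspace (cadj A) \<subseteq> colspace (cadj B)"
    have rs: "?Y ** B ** cadj A = cadj A" using h rS by auto
    have E: "?X ** B ** ?X = ?X \<and> ?X ** B ** ?Y = ?X"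
      using b_to_c[OF pA pB _ rs] h by auto
    have Q: "(?X ** B) ** (?X ** B) = ?X ** B" using E by (simp add: matrix_mul_assoc)
    have X: "?X = (?X ** B) ** ?Y" using E by simp
    have "B ** ?Y ** A = A \<and> ?X ** B ** ?X = ?X"
      by (rule c_to_a[OF pA pB Q X rs])
    then show "diamond_le A B" using D h by auto
  next
    assume d: "diamond_le A B"
    then have rA: "B ** ?Y ** A = A" and cs: "colspace (cadj A) \<subseteq> colspace (cadj B)"
      and E: "?X ** B ** ?X = ?X" using D by auto
    have F: "?X ** B ** ?Y = ?X" by (rule rA_XBY[OF pA pB rA])
    have Q: "(?X ** B) ** (?X ** B) = ?X ** B" using E by (simp add: matrix_mul_assoc)
    have X: "?X = (?X ** B) ** ?Y" using F by simp
    show "(\<exists>Q :: complex^'n^'n. Q ** Q = Q \<and> ?X = Q ** ?Y) \<and> colspace (cadj A) \<subseteq> colspace (cadj B)"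
    proof (rule conjI)
      show "\<exists>Q :: complex^'n^'n. Q ** Q = Q \<and> ?X = Q ** ?Y"
        by (rule exI[of _ "?X ** B"], rule conjI[OF Q X])
    qed (rule cs)
  next
    assume h: "(\<exists>Q :: complex^'n^'n. Q ** Q = Q \<and> ?X = Q ** ?Y) \<and> colspace (cadj A) \<subseteq> colspace (cadj B)"
    then obtain Q where Q: "Q ** Q = Q" "?X = Q ** ?Y" by (elim conjE exE)
    have rs: "?Y ** B ** cadj A = cadj A" using h rS by auto
    have "B ** ?Y ** A = A \<and> ?X ** B ** ?X = ?X"
      by (rule c_to_a[OF pA pB Q rs])
    then show "diamond_le A B" using D h by auto
  qed
qed

end
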